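(* Let $(M,D_t)$ be a differential module of rank $\mathfrak r$ over $\mathcal O_t^\pm$, let $a\in{\mathscr D}_t^\pm(k)$, and let $m_1,\dots,m_{\mathfrak r}$ be a basis of the space of horizontal elements of $M$ at $a$. The following are equivalent: (1) $m_1,\dots,m_{\mathfrak r}$ is an optimal basis at $a$; (2) for every $r$, letting $J_r=\{j: \mathcal R_a(m_j)=r\}$, every nontrivial $k$-linear combination $\sum_{j\in J_r}\alpha_jm_j$ has radius of convergence $r$ at $a$; (3) for every nonzero horizontal element $m$ at $a$ with radius of convergence $r$, writing $m=\sum_{i=1}^{\mathfrak r}\beta_im_i$, one has $\mathcal R_a(m_i)\ge r$ for every $i$ with $\beta_i\ne0$, and $\mathcal R_a(m_i)=r$ for at least one such $i$.
   Context: $k$ is an algebraically closed field complete for a non-archimedean absolute value extending the $p$-adic one. ${\mathscr D}_t^\pm$ is the unit disc (open or closed) with ring $\mathcal O_t^\pm$; $\mathcal O_t(a,r^-)$ the ring of power series in $t-a$ converging on $|t-a|<r$. For $f\in k[[t-a]]$, $\mathcal R_a(f)=\sup\{r\in[0,1):f\in\mathcal O_t(a,r^-)\}$, for vectors the minimum over components. A differential module of rank $\mathfrak r$ is a free $\mathcal O_t^\pm$-module $M$ of rank $\mathfrak r$ with $k$-linear $D_t$, $D_t(gm)=\frac{dg}{dt}m+gD_t(m)$. A horizontal element at $a$ is an element of $\ker D_t$ on $M\otimes\mathcal O_t(a,r^-)$ for some $r>0$, identified with its coordinate vector in $k[[t-a]]^{\mathfrak r}$ with respect to a fixed basis of $M$;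 its radius of convergence is $\mathcal R_a$ of this vector (independent of the basis). The horizontal elements at $a$ form a $k$-vector space of dimension $\mathfrak r$. The multiradius at $a$ is $(\mathcal R_1,\dots,\mathcal R_{\mathfrak r})$ with $\mathcal R_i=\sup\{r\in(0,1]:\dim_k\ker(D_t|M\otimes\mathcal O_t(a,r^-))\ge\mathfrak r-i+1\}$; a basis of horizontal elements at $a$ is optimal if the radii of its elements can be rearranged to form the multiradius. *)

theory Defs
  imports "HOL-Analysis.Analysis" "HOL-Computational_Algebra.Formal_Power_Series"
          "HOL-Computational_Algebra.Polynomial" "HOL-Library.Function_Algebras"
begin

definition absk :: "'k::{field,metric_space} \<Rightarrow> real" where
  "absk x = dist x 0"

definition padic_alg_closed_complete_field :: "nat \<Rightarrow> ('k::{field,metric_space}) itself \<Rightarrow> bool" where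
  "padic_alg_closed_complete_field p (_ :: 'k itself) \<longleftrightarrow>
     prime p
   \<and> (\<forall>x y :: 'k. dist x y = absk (x - y))
   \<and> (\<forall>x y :: 'k. absk (x * y) = absk x * absk y)
   \<and> (\<forall>x y :: 'k. absk (x + y) \<le> max (absk x) (absk y))
   \<and> absk (of_nat p :: 'k) = 1 / real p
   \<and> (\<forall>X :: nat \<Rightarrow> 'k. Cauchy X \<longrightarrow> convergent X)
   \<and> (\<forall>q :: 'k poly. 0 < degree q \<longrightarrow> (\<exists>x. poly q x = 0))"

text \<open>A power series f in (t - c) lies in O_t(c, r^-) iff it converges on |t - c| < r,
  i.e. |f_n| rho^n tends to 0 for every 0 \<le> rho < r.\<close>
definition conv_lt :: "real \<Rightarrow> 'k::{field,metric_space} fps \<Rightarrow> bool" where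
  "conv_lt r f \<longleftrightarrow> (\<forall>\<rho>. 0 \<le> \<rho> \<and> \<rho> < r \<longrightarrow> (\<lambda>n. absk (fps_nth f n) * \<rho> ^ n) \<longlonglongrightarrow> 0)"

text \<open>Ring O_t^\<pm> of the unit disc (centred at 0): cl = True gives the cl disc
  (|f_n| \<rightarrow> 0), cl = False the open disc (O_t(0,1^-)).\<close>
definition in_Ot :: "bool \<Rightarrow> 'k::{field,metric_space} fps \<Rightarrow> bool" where
  "in_Ot cl f \<longleftrightarrow>
     (if cl then (\<lambda>n. absk (fps_nth f n)) \<longlonglongrightarrow> 0 else conv_lt 1 f)"

definition in_disc :: "bool \<Rightarrow> 'k::{field,metric_space} \<Rightarrow> bool" where
  "in_disc cl a \<longleftrightarrow> (if cl then absk a \<le> 1 else absk a < 1)"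

text \<open>Taylor expansion at a of a series in t: the series in (t - a).\<close>
definition expand_at :: "'k::{field,metric_space} \<Rightarrow> 'k fps \<Rightarrow> 'k fps" where
  "expand_at a f = Abs_fps (\<lambda>m. \<Sum>n. of_nat (n choose m) * fps_nth f n * a ^ (n - m))"

definition Rad :: "'k::{field,metric_space} fps \<Rightarrow> real" where
  "Rad f = Sup {r. 0 \<le> r \<and> r < 1 \<and> conv_lt r f}"

definition RadV :: "nat \<Rightarrow> (nat \<Rightarrow> 'k::{field,metric_space} fps) \<Rightarrow> real" where
  "RadV n Y = Min ((\<lambda>i. Rad (Y i)) ` {..<n})"

text \<open>A differential module of rank n over O_t^\<pm> is given, with respect to a fixed basis
  e_0..e_{n-1} of M, by its connection matrix G (D_t e_j = \<Sum>i G i j e_i), entries in O_t^\<pm>.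
  Elements of M \<otimes> O_t(a,r^-) are coordinate vectors Y :: nat \<Rightarrow> k[[t-a]] supported on {..<n}.\<close>
definition diff_module :: "bool \<Rightarrow> nat \<Rightarrow> (nat \<Rightarrow> nat \<Rightarrow> 'k::{field,metric_space} fps) \<Rightarrow> bool" where
  "diff_module cl n G \<longleftrightarrow> (\<forall>i<n. \<forall>j<n. in_Ot cl (G i j))"

definition Dt_at :: "nat \<Rightarrow> (nat \<Rightarrow> nat \<Rightarrow> 'k::{field,metric_space} fps) \<Rightarrow> 'k \<Rightarrow>
    (nat \<Rightarrow> 'k fps) \<Rightarrow> (nat \<Rightarrow> 'k fps)" where
  "Dt_at n G a Y = (\<lambda>i. if i < n then fps_deriv (Y i) + (\<Sum>j<n. expand_at a (G i j) * Y j) else 0)"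

definition ker_r :: "nat \<Rightarrow> (nat \<Rightarrow> nat \<Rightarrow> 'k::{field,metric_space} fps) \<Rightarrow> 'k \<Rightarrow> real \<Rightarrow>
    (nat \<Rightarrow> 'k fps) set" where
  "ker_r n G a r = {Y. (\<forall>i\<ge>n. Y i = 0) \<and> (\<forall>i<n. conv_lt r (Y i)) \<and> Dt_at n G a Y = 0}"

definition horizontal :: "nat \<Rightarrow> (nat \<Rightarrow> nat \<Rightarrow> 'k::{field,metric_space} fps) \<Rightarrow> 'k \<Rightarrow>
    (nat \<Rightarrow> 'k fps) set" where
  "horizontal n G a = (\<Union>r\<in>{r. 0 < r}. ker_r n G a r)"

definition hscale :: "'k::{field,metric_space} \<Rightarrow> (nat \<Rightarrow> 'k fps) \<Rightarrow> (nat \<Rightarrow> 'k fps)" where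
  "hscale c Y = (\<lambda>j. fps_const c * Y j)"

text \<open>Multiradius (R_1,...,R_n) at a; index i ranges over {1..n}.\<close>
definition multirad :: "nat \<Rightarrow> (nat \<Rightarrow> nat \<Rightarrow> 'k::{field,metric_space} fps) \<Rightarrow> 'k \<Rightarrow> nat \<Rightarrow> real" where
  "multirad n G a i = Sup {r. 0 < r \<and> r \<le> 1 \<and>
      n - i + 1 \<le> vector_space.dim (hscale :: 'k \<Rightarrow> _) (ker_r n G a r)}"

definition optimal_basis :: "nat \<Rightarrow> (nat \<Rightarrow> nat \<Rightarrow> 'k::{field,metric_space} fps) \<Rightarrow> 'k \<Rightarrow>
    (nat \<Rightarrow> nat \<Rightarrow> 'k fps) \<Rightarrow> bool" where
  "optimal_basis n G a m \<longleftrightarrow>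
     (\<exists>\<sigma>. bij_betw \<sigma> {1..n} {..<n} \<and> (\<forall>i\<in>{1..n}. RadV n (m (\<sigma> i)) = multirad n G a i))"

end

theory Submission
  imports Defs
begin

locale ultra = vector_space scale for scale :: "'a::field \<Rightarrow> 'b::ab_group_add \<Rightarrow> 'b" (infixr \<open>*s\<close> 75) +
  fixes R :: "'b \<Rightarrow> real" and m :: "nat \<Rightarrow> 'b" and n :: nat
  assumes indep: "independent (m ` {..<n})"
    and injm: "inj_on m {..<n}"
    and R_add: "\<And>x y. min (R x) (R y) \<le> R (x + y)"
    and R_scale: "\<And>c x. c \<noteq> 0 \<Longrightarrow> R (c *s x) = R x"
    and R_zero: "R 0 = 1"
    and R_le1: "\<And>x. R x \<le> 1"
    and R_pos: "\<And>x. x \<in> span (m ` {..<n}) \<Longrightarrow> 0 < R x"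
begin

abbreviation "V \<equiv> span (m ` {..<n})"
definition "W r = {y \<in> V. r \<le> R y}"
definition "S r = {j. j < n \<and> r \<le> R (m j)}"
definition "mu i = Sup {r. 0 < r \<and> r \<le> 1 \<and> n - i + 1 \<le> dim (W r)}"

definition "opt \<longleftrightarrow> (\<exists>\<sigma>. bij_betw \<sigma> {1..n} {..<n} \<and> (\<forall>i\<in>{1..n}. R (m (\<sigma> i)) = mu i))"
definition "cond2 \<longleftrightarrow> (\<forall>r. \<forall>\<alpha> :: nat \<Rightarrow> 'a.
                 (\<exists>j\<in>{j. j < n \<and> R (m j) = r}. \<alpha> j \<noteq> 0) \<longrightarrow>
                 R (\<Sum>j\<in>{j. j < n \<and> R (m j) = r}. \<alpha> j *s m j) = r)"
definition "cond3 \<longleftrightarrow> (\<forall>y \<in> V. y \<noteq> 0 \<longrightarrow>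
                 (\<forall>\<beta> :: nat \<Rightarrow> 'a. y = (\<Sum>i<n. \<beta> i *s m i) \<longrightarrow>
                    (\<forall>i<n. \<beta> i \<noteq> 0 \<longrightarrow> R y \<le> R (m i))
                  \<and> (\<exists>i<n. \<beta> i \<noteq> 0 \<and> R (m i) = R y)))"

lemma R_neg: "R (- x) = R x"
proof -
  have "R ((-1) *s x) = R x" by (rule R_scale) simp
  then show ?thesis by simp
qed

lemma R_strict: assumes "R x < R y" shows "R (x + y) = R x"
proof -
  have "min (R (x + y)) (R (- y)) \<le> R (x + y + - y)" by (rule R_add)
  then have "min (R (x + y)) (R y) \<le> R x" by (simp add: R_neg)
  with assms have "R (x + y) \<le> R x" by (auto simp: min_def split: if_splits)
  moreover have "min (R x) (R y) \<le> R (x + y)" by (rule R_add)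
  ultimately show ?thesis using assms by simp
qed

lemma R_sum_ge:
  assumes "finite A" "t \<le> 1" "\<And>i. i \<in> A \<Longrightarrow> c i \<noteq> 0 \<Longrightarrow> t \<le> R (v i)"
  shows "t \<le> R (\<Sum>i\<in>A. c i *s v i)"
  using assms
proof (induction A rule: finite_induct)
  case empty then show ?case by (simp add: R_zero)
next
  case (insert a A)
  have h1: "t \<le> R (c a *s v a)"
    using insert.prems by (cases "c a = 0") (auto simp: R_zero R_scale)
  have h2: "t \<le> R (\<Sum>i\<in>A. c i *s v i)" using insert by auto
  have "min (R (c a *s v a)) (R (\<Sum>i\<in>A. c i *s v i)) \<le> R (c a *s v a + (\<Sum>i\<in>A. c i *s v i))"
    by (rule R_add)
  with h1 h2 insert.hyps show ?case by simp
qed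

lemma sum_in_V: "(\<Sum>i\<in>A. \<beta> i *s m i) \<in> V" if "A \<subseteq> {..<n}"
  using that by (intro span_sum span_scale span_base) auto

lemma coord: "y \<in> V \<longleftrightarrow> (\<exists>\<beta>. y = (\<Sum>i<n. \<beta> i *s m i))"
proof
  assume "y \<in> V"
  then obtain u where "y = (\<Sum>v\<in>m ` {..<n}. u v *s v)" using span_finite[of "m ` {..<n}"] by auto
  also have "\<dots> = (\<Sum>i<n. u (m i) *s m i)" by (simp add: sum.reindex[OF injm])
  finally show "\<exists>\<beta>. y = (\<Sum>i<n. \<beta> i *s m i)" by (intro exI)
next
  assume "\<exists>\<beta>. y = (\<Sum>i<n. \<beta> i *s m i)"
  then obtain \<beta> where "y = (\<Sum>i<n. \<beta> i *s m i)" by blast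
  then show "y \<in> V" using sum_in_V[of "{..<n}" \<beta>] by simp
qed

lemma unique0: assumes "(\<Sum>i<n. \<beta> i *s m i) = 0" "i < n" shows "\<beta> i = 0"
proof -
  define u where "u v = \<beta> (inv_into {..<n} m v)" for v
  have "(\<Sum>v\<in>m ` {..<n}. u v *s v) = (\<Sum>i<n. u (m i) *s m i)" by (simp add: sum.reindex[OF injm])
  also have "\<dots> = (\<Sum>i<n. \<beta> i *s m i)" using injm by (auto simp: u_def intro!: sum.cong)
  finally have "(\<Sum>v\<in>m ` {..<n}. u v *s v) = 0" using assms by simp
  with indep have "u (m i) = 0" using assms(2)
    unfolding independent_explicit_finite_subsets by blast
  then show ?thesis using injm assms(2) by (simp add: u_def)
qed

lemma unique: assumes "(\<Sum>i<n. \<beta> i *s m i) = (\<Sum>i<n. \<gamma> i *s m i)" "i < n" shows "\<beta> i = \<gamma> i"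
proof -
  have "(\<Sum>i<n. (\<beta> i - \<gamma> i) *s m i) = 0"
    using assms by (simp add: scale_left_diff_distrib sum_subtractf)
  from unique0[OF this assms(2)] show ?thesis by simp
qed

lemma Rpos_le: "y \<in> V \<Longrightarrow> 0 < R y \<and> R y \<le> 1" using R_pos R_le1 by auto

lemma minle: assumes "y = (\<Sum>i<n. \<beta> i *s m i)" "{i. i<n \<and> \<beta> i \<noteq> 0} \<noteq> {}"
  shows "Min ((\<lambda>i. R (m i)) ` {i. i<n \<and> \<beta> i \<noteq> 0}) \<le> R y"
proof -
  let ?Sp = "{i. i<n \<and> \<beta> i \<noteq> 0}"
  obtain i0 where "i0 \<in> ?Sp" using assms by blast
  then have "Min ((\<lambda>i. R (m i)) ` ?Sp) \<le> 1" using R_le1 by (subst Min_le_iff) auto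
  then show ?thesis unfolding assms(1)
    by (intro R_sum_ge) auto
qed

lemma c3_c2: assumes "cond3" shows "cond2"
  unfolding cond2_def
proof (intro allI impI)
  fix r and \<alpha> :: "nat \<Rightarrow> 'a"
  let ?J = "{j. j < n \<and> R (m j) = r}"
  assume "\<exists>j\<in>?J. \<alpha> j \<noteq> 0"
  then obtain j0 where j0: "j0 \<in> ?J" "\<alpha> j0 \<noteq> 0" by blast
  define \<beta> where "\<beta> i = (if i \<in> ?J then \<alpha> i else 0)" for i
  let ?y = "\<Sum>j\<in>?J. \<alpha> j *s m j"
  have J: "?J = {j \<in> {..<n}. R (m j) = r}" by auto
  have yeq: "?y = (\<Sum>i<n. \<beta> i *s m i)"
    unfolding J sum.inter_filter[OF finite_lessThan] by (intro sum.cong) (auto simp: \<beta>_def)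
  have yV: "?y \<in> V" by (rule sum_in_V) auto
  have "?y \<noteq> 0"
  proof
    assume "?y = 0"
    then have "\<beta> j0 = 0" using yeq j0 by (intro unique0) auto
    then show False using j0 by (simp add: \<beta>_def)
  qed
  with assms yV yeq obtain i where "i < n" "\<beta> i \<noteq> 0" "R (m i) = R ?y"
    unfolding cond3_def by blast
  then show "R ?y = r" by (auto simp: \<beta>_def split: if_splits)
qed

lemma c2_c3: assumes "cond2" shows "cond3"
  unfolding cond3_def
proof (intro ballI impI allI)
  fix y \<beta>
  assume yV: "y \<in> V" and y0: "y \<noteq> 0" and yeq: "y = (\<Sum>i<n. \<beta> i *s m i)"
  let ?Sp = "{i. i<n \<and> \<beta> i \<noteq> 0}"
  have Spne: "?Sp \<noteq> {}"
  proof
    assume "?Sp = {}"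
    then have "y = (\<Sum>i<n. 0 *s m i)" unfolding yeq by (intro sum.cong) auto
    then show False using y0 by simp
  qed
  have finSp: "finite ?Sp" by simp
  define r0 where "r0 = Min ((\<lambda>i. R (m i)) ` ?Sp)"
  have "r0 \<in> (\<lambda>i. R (m i)) ` ?Sp" unfolding r0_def using Spne by (intro Min_in) auto
  then obtain i0 where i0: "i0 \<in> ?Sp" "R (m i0) = r0" by auto
  have r0le: "\<And>i. i \<in> ?Sp \<Longrightarrow> r0 \<le> R (m i)" unfolding r0_def by simp
  let ?J = "{j. j < n \<and> R (m j) = r0}"
  define y1 where "y1 = (\<Sum>j\<in>?J. \<beta> j *s m j)"
  define y2 where "y2 = (\<Sum>j\<in>{..<n} - ?J. \<beta> j *s m j)"
  have yy: "y = y1 + y2" unfolding yeq y1_def y2_def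
    by (rule sum.subset_diff[of "?J" "{..<n}", simplified Diff_Diff_Int, THEN trans]) (auto intro: sum.cong)
  have Ry1: "R y1 = r0" using assms i0 unfolding cond2_def y1_def by auto
  have Ry: "R y = r0"
  proof (cases "?Sp \<subseteq> ?J")
    case True
    have "y2 = (\<Sum>j\<in>{..<n} - ?J. 0 *s m j)" unfolding y2_def
      using True by (intro sum.cong) auto
    then show ?thesis using yy Ry1 by simp
  next
    case False
    let ?D = "?Sp - ?J"
    have Dne: "?D \<noteq> {}" using False by blast
    define t where "t = Min ((\<lambda>i. R (m i)) ` ?D)"
    have "t \<in> (\<lambda>i. R (m i)) ` ?D" unfolding t_def using Dne by (intro Min_in) auto
    then obtain i1 where i1: "i1 \<in> ?D" "R (m i1) = t" by auto
    have "r0 \<le> t" using r0le i1 by auto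
    moreover have "r0 \<noteq> t" using i1 by auto
    ultimately have rt: "r0 < t" by simp
    have "t \<le> 1" using i1 R_le1 by metis
    then have "t \<le> R y2" unfolding y2_def
      by (intro R_sum_ge) (auto simp: t_def)
    with rt Ry1 have "R y1 < R y2" by simp
    then show ?thesis using yy R_strict Ry1 by simp
  qed
  show "(\<forall>i<n. \<beta> i \<noteq> 0 \<longrightarrow> R y \<le> R (m i)) \<and> (\<exists>i<n. \<beta> i \<noteq> 0 \<and> R (m i) = R y)"
    using Ry r0le i0 by auto
qed


lemma finS: "finite (S r)" unfolding S_def by simp

lemma cardmS: "card (m ` S r) = card (S r)"
  by (rule card_image, rule inj_on_subset[OF injm]) (auto simp: S_def)

lemma mS_W: "m ` S r \<subseteq> W r"
  by (auto simp: S_def W_def intro: span_base)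

lemma indepS: "independent (m ` S r)"
  by (rule independent_mono[OF indep]) (auto simp: S_def)

lemma c3_spanS: assumes "cond3" shows "W r \<subseteq> span (m ` S r)"
proof
  fix y assume "y \<in> W r"
  then have yV: "y \<in> V" and ry: "r \<le> R y" by (auto simp: W_def)
  show "y \<in> span (m ` S r)"
  proof (cases "y = 0")
    case True then show ?thesis by (simp add: span_zero)
  next
    case False
    obtain \<beta> where yeq: "y = (\<Sum>i<n. \<beta> i *s m i)" using yV coord by blast
    with assms yV False have h: "\<forall>i<n. \<beta> i \<noteq> 0 \<longrightarrow> R y \<le> R (m i)" unfolding cond3_def by blast
    have z: "\<forall>i\<in>{..<n} - S r. \<beta> i *s m i = 0"
      proof
        fix i assume i: "i \<in> {..<n} - S r"
        have "\<beta> i = 0"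
        proof (rule ccontr)
          assume "\<beta> i \<noteq> 0"
          then have "R y \<le> R (m i)" using h i by auto
          then show False using i ry by (auto simp: S_def)
        qed
        then show "\<beta> i *s m i = 0" by simp
      qed
    have "y = (\<Sum>i\<in>S r. \<beta> i *s m i)" unfolding yeq
      by (rule sum.mono_neutral_right[OF _ _ z]) (auto simp: S_def)
    also have "\<dots> \<in> span (m ` S r)" by (intro span_sum span_scale span_base) auto
    finally show ?thesis .
  qed
qed

lemma c3_dim: assumes "cond3" shows "dim (W r) = card (S r)"
  using basis_card_eq_dim[OF mS_W c3_spanS[OF assms] indepS] cardmS by simp

lemma spanS_c3: assumes "\<And>r. 0 < r \<Longrightarrow> r \<le> 1 \<Longrightarrow> W r \<subseteq> span (m ` S r)" shows "cond3"
  unfolding cond3_def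
proof (intro ballI impI allI)
  fix y \<beta>
  assume yV: "y \<in> V" and y0: "y \<noteq> 0" and yeq: "y = (\<Sum>i<n. \<beta> i *s m i)"
  let ?r = "R y"
  have "y \<in> W ?r" using yV by (simp add: W_def)
  with assms Rpos_le[OF yV] have "y \<in> span (m ` S ?r)" by blast
  then obtain u where "y = (\<Sum>v\<in>m ` S ?r. u v *s v)" using span_finite[of "m ` S ?r"] finS by auto
  also have "\<dots> = (\<Sum>i\<in>S ?r. u (m i) *s m i)"
    by (rule sum.reindex[unfolded comp_def]) (rule inj_on_subset[OF injm], auto simp: S_def)
  also have "\<dots> = (\<Sum>i<n. (if i \<in> S ?r then u (m i) else 0) *s m i)"
    by (rule sum.mono_neutral_cong_left) (auto simp: S_def)
  finally have "(\<Sum>i<n. \<beta> i *s m i) = (\<Sum>i<n. (if i \<in> S ?r then u (m i) else 0) *s m i)"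
    using yeq by simp
  then have beq: "\<And>i. i < n \<Longrightarrow> \<beta> i = (if i \<in> S ?r then u (m i) else 0)" by (rule unique)
  have part1: "\<forall>i<n. \<beta> i \<noteq> 0 \<longrightarrow> R y \<le> R (m i)"
    using beq by (auto simp: S_def split: if_splits)
  let ?Sp = "{i. i<n \<and> \<beta> i \<noteq> 0}"
  have Spne: "?Sp \<noteq> {}"
  proof
    assume "?Sp = {}"
    then have "y = (\<Sum>i<n. 0 *s m i)" unfolding yeq by (intro sum.cong) auto
    then show False using y0 by simp
  qed
  have "Min ((\<lambda>i. R (m i)) ` ?Sp) \<in> (\<lambda>i. R (m i)) ` ?Sp" using Spne by (intro Min_in) auto
  then obtain i0 where i0: "i0 \<in> ?Sp" "R (m i0) = Min ((\<lambda>i. R (m i)) ` ?Sp)" by auto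
  have "R (m i0) \<le> R y" using i0 minle[OF yeq Spne] by simp
  moreover have "R y \<le> R (m i0)" using part1 i0 by auto
  ultimately show "(\<forall>i<n. \<beta> i \<noteq> 0 \<longrightarrow> R y \<le> R (m i)) \<and> (\<exists>i<n. \<beta> i \<noteq> 0 \<and> R (m i) = R y)"
    using part1 i0 by auto
qed


lemma W_sub_V: "W r \<subseteq> V" by (auto simp: W_def)

lemma dim_W_le: "dim (W r) \<le> n"
proof -
  have "dim (W r) \<le> card (m ` {..<n})" by (rule dim_le_card[OF W_sub_V]) simp
  also have "\<dots> = n" using card_image[OF injm] by simp
  finally show ?thesis .
qed

lemma indep_card_le_dimW:
  assumes "T \<subseteq> W r" "independent T" shows "finite T \<and> card T \<le> dim (W r)"
proof -
  obtain A where A: "A \<subseteq> W r" "independent A" "W r \<subseteq> span A" "card A = dim (W r)"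
    using basis_exists[of "W r"] by blast
  have "A \<subseteq> span (m ` {..<n})" using A(1) W_sub_V by auto
  then have fA: "finite A" using independent_span_bound[of "m ` {..<n}" A] A(2) by auto
  have "T \<subseteq> span A" using assms(1) A(3) by auto
  from independent_span_bound[OF fA assms(2) this] A(4) show ?thesis by simp
qed

lemma opt_spanS: assumes "opt" "0 < r" "r \<le> 1" shows "W r \<subseteq> span (m ` S r)"
proof
  fix y assume yW: "y \<in> W r"
  show "y \<in> span (m ` S r)"
  proof (rule ccontr)
    assume ny: "y \<notin> span (m ` S r)"
    obtain \<sigma> where \<sigma>: "bij_betw \<sigma> {1..n} {..<n}" "\<And>i. i\<in>{1..n} \<Longrightarrow> R (m (\<sigma> i)) = mu i"
      using assms(1) unfolding opt_def by blast
    let ?T = "insert y (m ` S r)"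
    have yn: "y \<notin> m ` S r" using ny span_base by blast
    have "independent ?T" using ny indepS independent_insert by auto
    moreover have "?T \<subseteq> W r" using yW mS_W by auto
    ultimately have "card ?T \<le> dim (W r)" using indep_card_le_dimW by blast
    then have cT: "card (S r) + 1 \<le> dim (W r)" using yn finS cardmS by simp
    define d where "d = dim (W r)"
    have d1: "1 \<le> d" "d \<le> n" using cT dim_W_le unfolding d_def by auto
    define i0 where "i0 = n - d + 1"
    have sub: "{i0..n} \<subseteq> {1..n}" unfolding i0_def by auto
    have "\<sigma> ` {i0..n} \<subseteq> S r"
    proof
      fix j assume "j \<in> \<sigma> ` {i0..n}"
      then obtain i where i: "i \<in> {i0..n}" "j = \<sigma> i" by auto
      have jn: "j < n" using i sub \<sigma>(1) unfolding bij_betw_def by auto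
      have "r \<in> {r. 0 < r \<and> r \<le> 1 \<and> n - i + 1 \<le> dim (W r)}"
        using assms(2,3) i d1 unfolding i0_def d_def by auto
      moreover have "bdd_above {r. 0 < r \<and> r \<le> 1 \<and> n - i + 1 \<le> dim (W r)}"
        by (rule bdd_aboveI[of _ 1]) auto
      ultimately have "r \<le> mu i" unfolding mu_def by (rule cSup_upper)
      also have "\<dots> = R (m j)" using \<sigma>(2)[of i] i sub by auto
      finally show "j \<in> S r" using jn by (simp add: S_def)
    qed
    then have "card (\<sigma> ` {i0..n}) \<le> card (S r)" using finS by (rule card_mono[rotated])
    moreover have "card (\<sigma> ` {i0..n}) = d"
      using card_image[OF inj_on_subset[OF bij_betw_imp_inj_on[OF \<sigma>(1)] sub]] d1 unfolding i0_def by simp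
    ultimately show False using cT unfolding d_def by simp
  qed
qed

lemma opt_c3: "opt \<Longrightarrow> cond3"
  by (rule spanS_c3) (rule opt_spanS)


lemma c3_opt: assumes "cond3" shows "opt"
proof -
  define xs where "xs = sort_key (\<lambda>j. R (m j)) [0..<n]"
  have dxs: "distinct xs" and sxs: "set xs = {..<n}" and lxs: "length xs = n"
    by (auto simp: xs_def)
  have mono: "\<And>k k'. k \<le> k' \<Longrightarrow> k' < n \<Longrightarrow> R (m (xs ! k)) \<le> R (m (xs ! k'))"
  proof -
    fix k k' :: nat assume "k \<le> k'" "k' < n"
    moreover have "sorted (map (\<lambda>j. R (m j)) xs)" by (simp add: xs_def)
    ultimately show "R (m (xs ! k)) \<le> R (m (xs ! k'))"
      using sorted_nth_mono[of "map (\<lambda>j. R (m j)) xs" k k'] lxs by simp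
  qed
  have xin: "\<And>k. k < n \<Longrightarrow> xs ! k < n" using sxs lxs nth_mem by fastforce
  have injx: "inj_on ((!) xs) A" if "A \<subseteq> {..<n}" for A
    using inj_on_nth[OF dxs, of A] that lxs by auto
  have claim: "n - k \<le> card (S r) \<longleftrightarrow> r \<le> R (m (xs ! k))" if k: "k < n" for k r
  proof
    assume "r \<le> R (m (xs ! k))"
    then have "(!) xs ` {k..<n} \<subseteq> S r" using mono xin by (fastforce simp: S_def)
    then have "card ((!) xs ` {k..<n}) \<le> card (S r)" using finS by (rule card_mono[rotated])
    then show "n - k \<le> card (S r)" using card_image[OF injx[of "{k..<n}"]] by fastforce
  next
    assume c: "n - k \<le> card (S r)"
    show "r \<le> R (m (xs ! k))"
    proof (rule ccontr)
      assume "\<not> r \<le> R (m (xs ! k))"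
      then have lt: "R (m (xs ! k)) < r" by simp
      have "S r \<subseteq> (!) xs ` {Suc k..<n}"
      proof
        fix j assume j: "j \<in> S r"
        then have "j \<in> set xs" using sxs by (auto simp: S_def)
        then obtain k' where k': "k' < n" "j = xs ! k'" using lxs by (auto simp: in_set_conv_nth)
        have "\<not> k' \<le> k"
        proof
          assume "k' \<le> k"
          then have "R (m j) \<le> R (m (xs ! k))" using mono k k' by simp
          then show False using lt j by (auto simp: S_def)
        qed
        then show "j \<in> (!) xs ` {Suc k..<n}" using k' by auto
      qed
      then have "card (S r) \<le> card ((!) xs ` {Suc k..<n})" by (rule card_mono[rotated]) simp
      also have "\<dots> \<le> card {Suc k..<n}" by (rule card_image_le) simp
      finally show False using c k by simp
    qed
  qed
  define \<sigma> where "\<sigma> i = xs ! (i - 1)" for i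
  have b1: "bij_betw (\<lambda>i. i - 1) {1..n} {..<n}"
    by (rule bij_betw_byWitness[where f' = Suc]) auto
  have b2: "bij_betw ((!) xs) {..<n} {..<n}"
    using bij_betw_nth[OF dxs] lxs sxs by simp
  have bij: "bij_betw \<sigma> {1..n} {..<n}"
    using bij_betw_trans[OF b1 b2] unfolding \<sigma>_def comp_def by simp
  have "R (m (\<sigma> i)) = mu i" if i: "i \<in> {1..n}" for i
  proof -
    define k where "k = i - 1"
    have k: "k < n" "n - i + 1 = n - k" using i unfolding k_def by auto
    have pos: "0 < R (m (xs ! k))" "R (m (xs ! k)) \<le> 1"
      using Rpos_le[of "m (xs ! k)"] xin[OF k(1)] by (auto intro: span_base)
    have "{r. 0 < r \<and> r \<le> 1 \<and> n - i + 1 \<le> dim (W r)} = {0<..R (m (xs ! k))}"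
      using claim[OF k(1)] c3_dim[OF assms] k(2) pos by auto
    then have "mu i = R (m (xs ! k))" unfolding mu_def using pos by simp
    then show ?thesis unfolding \<sigma>_def k_def by simp
  qed
  with bij show ?thesis unfolding opt_def by blast
qed

theorem main: "(opt \<longleftrightarrow> cond2) \<and> (opt \<longleftrightarrow> cond3)"
  using c3_opt opt_c3 c2_c3 c3_c2 by blast


end

lemma absk_nonneg: "0 \<le> absk x" by (simp add: absk_def)
lemma absk_eq0: "absk x = 0 \<longleftrightarrow> x = 0" by (simp add: absk_def)

lemma conv_lt_0: "conv_lt 0 f" by (auto simp: conv_lt_def)

lemma conv_lt_mono: "conv_lt r f \<Longrightarrow> s \<le> r \<Longrightarrow> conv_lt s f"
  by (simp add: conv_lt_def)

lemma conv_lt_zero_fps: "conv_lt r (0 :: 'k::{field,metric_space} fps)"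
  by (simp add: conv_lt_def absk_def)

lemma conv_lt_add:
  fixes f g :: "'k::{field,metric_space} fps"
  assumes U: "\<forall>x y :: 'k. absk (x + y) \<le> max (absk x) (absk y)"
    and "conv_lt r f" "conv_lt r g"
  shows "conv_lt r (f + g)"
  unfolding conv_lt_def
proof (intro allI impI)
  fix \<rho> :: real assume \<rho>: "0 \<le> \<rho> \<and> \<rho> < r"
  have t: "(\<lambda>n. absk (fps_nth f n) * \<rho> ^ n + absk (fps_nth g n) * \<rho> ^ n) \<longlonglongrightarrow> 0"
  proof -
    have t1: "(\<lambda>n. absk (fps_nth f n) * \<rho> ^ n) \<longlonglongrightarrow> 0" using assms(2) \<rho> unfolding conv_lt_def by blast
    have t2: "(\<lambda>n. absk (fps_nth g n) * \<rho> ^ n) \<longlonglongrightarrow> 0" using assms(3) \<rho> unfolding conv_lt_def by blast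
    show ?thesis using tendsto_add[OF t1 t2] by simp
  qed
  show "(\<lambda>n. absk (fps_nth (f + g) n) * \<rho> ^ n) \<longlonglongrightarrow> 0"
  proof (rule Lim_null_comparison[OF _ t], rule always_eventually, rule allI)
    fix n
    have a: "absk (fps_nth f n + fps_nth g n) \<le> absk (fps_nth f n) + absk (fps_nth g n)"
    proof -
      have "max (absk (fps_nth f n)) (absk (fps_nth g n)) \<le> absk (fps_nth f n) + absk (fps_nth g n)"
        using absk_nonneg[of "fps_nth f n"] absk_nonneg[of "fps_nth g n"] by (simp add: max_def)
      then show ?thesis using U by (meson order_trans)
    qed
    have "0 \<le> \<rho> ^ n" using \<rho> by simp
    then have "absk (fps_nth f n + fps_nth g n) * \<rho> ^ n \<le> (absk (fps_nth f n) + absk (fps_nth g n)) * \<rho> ^ n"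
      using a by (rule mult_right_mono[rotated])
    moreover have "0 \<le> absk (fps_nth f n + fps_nth g n) * \<rho> ^ n"
      using absk_nonneg \<open>0 \<le> \<rho> ^ n\<close> by (rule mult_nonneg_nonneg)
    ultimately show "norm (absk (fps_nth (f + g) n) * \<rho> ^ n) \<le> absk (fps_nth f n) * \<rho> ^ n + absk (fps_nth g n) * \<rho> ^ n"
      by (simp only: fps_add_nth real_norm_def abs_of_nonneg distrib_right)
  qed
qed

lemma conv_lt_scale:
  fixes f :: "'k::{field,metric_space} fps"
  assumes M: "\<forall>x y :: 'k. absk (x * y) = absk x * absk y" and c: "c \<noteq> 0"
  shows "conv_lt r (fps_const c * f) \<longleftrightarrow> conv_lt r f"
proof -
  have cne: "absk c \<noteq> 0" using c absk_eq0 by blast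
  have "\<And>\<rho>. ((\<lambda>n. absk (fps_nth (fps_const c * f) n) * \<rho> ^ n) \<longlonglongrightarrow> 0) \<longleftrightarrow>
        ((\<lambda>n. absk (fps_nth f n) * \<rho> ^ n) \<longlonglongrightarrow> 0)"
  proof -
    fix \<rho> :: real
    have "((\<lambda>n. absk (fps_nth (fps_const c * f) n) * \<rho> ^ n) \<longlonglongrightarrow> 0) \<longleftrightarrow>
          ((\<lambda>n. absk c * (absk (fps_nth f n) * \<rho> ^ n)) \<longlonglongrightarrow> absk c * 0)"
    proof -
      have "(\<lambda>n. absk (fps_nth (fps_const c * f) n) * \<rho> ^ n) = (\<lambda>n. absk c * (absk (fps_nth f n) * \<rho> ^ n))"
        using M by (simp only: fps_mult_left_const_nth mult.assoc)
      then show ?thesis by (simp only: mult_zero_right)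
    qed
    also have "\<dots> \<longleftrightarrow> ((\<lambda>n. absk (fps_nth f n) * \<rho> ^ n) \<longlonglongrightarrow> 0)"
      using cne by (rule tendsto_mult_left_iff)
    finally show "((\<lambda>n. absk (fps_nth (fps_const c * f) n) * \<rho> ^ n) \<longlonglongrightarrow> 0) \<longleftrightarrow>
        ((\<lambda>n. absk (fps_nth f n) * \<rho> ^ n) \<longlonglongrightarrow> 0)" .
  qed
  then show ?thesis unfolding conv_lt_def by simp
qed

lemma Rad_set: "0 \<in> {r. 0 \<le> r \<and> r < 1 \<and> conv_lt r f}" "bdd_above {r. 0 \<le> r \<and> r < 1 \<and> conv_lt r f}"
  by (auto simp: conv_lt_0 intro!: bdd_aboveI[of _ 1])

lemma Rad_ge0: "0 \<le> Rad f"
  unfolding Rad_def by (rule cSup_upper[OF Rad_set(1) Rad_set(2)])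

lemma Rad_le1: "Rad f \<le> 1"
  unfolding Rad_def by (rule cSup_least) (use Rad_set(1) in blast, auto)

lemma conv_lt_Rad:
  assumes "0 < r" "r \<le> 1" shows "conv_lt r f \<longleftrightarrow> r \<le> Rad f"
proof
  assume c: "conv_lt r f"
  show "r \<le> Rad f"
  proof (rule dense_le_bounded[OF assms(1)])
    fix w assume "0 < w" "w < r"
    then have "w \<in> {r. 0 \<le> r \<and> r < 1 \<and> conv_lt r f}" using c assms conv_lt_mono[of r f w] by auto
    then show "w \<le> Rad f" unfolding Rad_def using Rad_set(2) by (rule cSup_upper)
  qed
next
  assume rR: "r \<le> Rad f"
  show "conv_lt r f" unfolding conv_lt_def
  proof (intro allI impI)
    fix \<rho> :: real assume \<rho>: "0 \<le> \<rho> \<and> \<rho> < r"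
    then have "\<rho> < Sup {r. 0 \<le> r \<and> r < 1 \<and> conv_lt r f}" using rR unfolding Rad_def by simp
    then obtain s where s: "s \<in> {r. 0 \<le> r \<and> r < 1 \<and> conv_lt r f}" "\<rho> < s"
      using less_cSup_iff[OF _ Rad_set(2)] Rad_set(1) by blast
    then show "(\<lambda>n. absk (fps_nth f n) * \<rho> ^ n) \<longlonglongrightarrow> 0" using \<rho> unfolding conv_lt_def by auto
  qed
qed

lemma Rad_add:
  fixes f g :: "'k::{field,metric_space} fps"
  assumes U: "\<forall>x y :: 'k. absk (x + y) \<le> max (absk x) (absk y)"
  shows "min (Rad f) (Rad g) \<le> Rad (f + g)"
proof (cases "min (Rad f) (Rad g) = 0")
  case True then show ?thesis using Rad_ge0 by simp
next
  case False
  let ?s = "min (Rad f) (Rad g)"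
  have s1: "0 < ?s" using False Rad_ge0[of f] Rad_ge0[of g] by linarith
  have s2: "?s \<le> 1" using Rad_le1[of f] by linarith
  have "conv_lt ?s f" by (subst conv_lt_Rad[OF s1 s2]) simp
  moreover have "conv_lt ?s g" by (subst conv_lt_Rad[OF s1 s2]) simp
  ultimately have "conv_lt ?s (f + g)" by (rule conv_lt_add[OF U])
  then show ?thesis by (subst (asm) conv_lt_Rad[OF s1 s2])
qed

lemma Rad_scale:
  fixes f :: "'k::{field,metric_space} fps"
  assumes M: "\<forall>x y :: 'k. absk (x * y) = absk x * absk y" and c: "c \<noteq> 0"
  shows "Rad (fps_const c * f) = Rad f"
proof -
  have "{r. 0 \<le> r \<and> r < 1 \<and> conv_lt r (fps_const c * f)} = {r. 0 \<le> r \<and> r < 1 \<and> conv_lt r f}"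
    using conv_lt_scale[OF M c] by blast
  then show ?thesis unfolding Rad_def by (rule arg_cong)
qed

lemma Rad_zero: "Rad (0 :: 'k::{field,metric_space} fps) = 1"
proof -
  have c: "conv_lt 1 (0 :: 'k fps)" by (rule conv_lt_zero_fps)
  have "1 \<le> Rad (0 :: 'k fps)" using conv_lt_Rad[of 1 "0 :: 'k fps"] c by simp
  then show ?thesis using Rad_le1[of "0 :: 'k fps"] by linarith
qed

lemma RadV_le: "i < n \<Longrightarrow> RadV n Y \<le> Rad (Y i)"
  unfolding RadV_def by simp

lemma RadV_ge_iff: "0 < n \<Longrightarrow> r \<le> RadV n Y \<longleftrightarrow> (\<forall>i<n. r \<le> Rad (Y i))"
  unfolding RadV_def by (subst Min_ge_iff) auto

lemma RadV_le1: "0 < n \<Longrightarrow> RadV n Y \<le> 1"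
  using RadV_le[of 0 n Y] Rad_le1[of "Y 0"] by simp

lemma in_ker_iff:
  fixes G :: "nat \<Rightarrow> nat \<Rightarrow> 'k::{field,metric_space} fps"
  assumes n: "0 < n" and r: "0 < r" "r \<le> 1"
  shows "Y \<in> ker_r n G a r \<longleftrightarrow> Y \<in> horizontal n G a \<and> r \<le> RadV n Y"
proof
  assume Y: "Y \<in> ker_r n G a r"
  then have "Y \<in> horizontal n G a" using r unfolding horizontal_def by blast
  moreover have "\<forall>i<n. r \<le> Rad (Y i)" using Y conv_lt_Rad[OF r] unfolding ker_r_def by blast
  ultimately show "Y \<in> horizontal n G a \<and> r \<le> RadV n Y" using RadV_ge_iff[OF n] by blast
next
  assume Y: "Y \<in> horizontal n G a \<and> r \<le> RadV n Y"
  then obtain r0 where "Y \<in> ker_r n G a r0" unfolding horizontal_def by blast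
  then have a: "(\<forall>i\<ge>n. Y i = 0)" "Dt_at n G a Y = 0" unfolding ker_r_def by auto
  have "\<forall>i<n. conv_lt r (Y i)" using Y RadV_ge_iff[OF n] conv_lt_Rad[OF r] by blast
  with a show "Y \<in> ker_r n G a r" unfolding ker_r_def by blast
qed

lemma horiz_pos:
  fixes G :: "nat \<Rightarrow> nat \<Rightarrow> 'k::{field,metric_space} fps"
  assumes n: "0 < n" and Y: "Y \<in> horizontal n G a" shows "0 < RadV n Y"
proof -
  obtain r0 where r0: "0 < r0" "Y \<in> ker_r n G a r0" using Y unfolding horizontal_def by blast
  define s where "s = min r0 1"
  have s: "0 < s" "s \<le> 1" "s \<le> r0" using r0 by (auto simp: s_def)
  have "\<forall>i<n. s \<le> Rad (Y i)"
    using r0 conv_lt_mono[OF _ s(3)] conv_lt_Rad[OF s(1,2)] unfolding ker_r_def by blast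
  then have "s \<le> RadV n Y" using RadV_ge_iff[OF n] by blast
  with s show ?thesis by simp
qed

lemma vs_hscale: "vector_space (hscale :: 'k::{field,metric_space} \<Rightarrow> (nat \<Rightarrow> 'k fps) \<Rightarrow> _)"
proof
  fix a b :: 'k and x y :: "nat \<Rightarrow> 'k fps"
  show "hscale a (x + y) = hscale a x + hscale a y"
    by (simp add: hscale_def fun_eq_iff distrib_left)
  show "hscale (a + b) x = hscale a x + hscale b x"
  proof -
    have "\<And>z. fps_const (a + b) * z = fps_const a * z + fps_const b * z"
      by (simp add: fps_eq_iff distrib_right)
    then show ?thesis by (simp add: hscale_def fun_eq_iff)
  qed
  show "hscale a (hscale b x) = hscale (a * b) x"
  proof -
    have "\<And>z. fps_const a * (fps_const b * z) = fps_const (a * b) * z"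
      by (simp add: fps_eq_iff mult.assoc)
    then show ?thesis by (simp add: hscale_def fun_eq_iff)
  qed
  show "hscale 1 x = x"
    by (simp add: hscale_def)
qed

theorem lemma3p7:
  fixes p :: nat and cl :: bool and n :: nat
    and G :: "nat \<Rightarrow> nat \<Rightarrow> 'k::{field,metric_space} fps"
    and a :: 'k and m :: "nat \<Rightarrow> nat \<Rightarrow> 'k fps"
  assumes "padic_alg_closed_complete_field p TYPE('k)"
    and "diff_module cl n G"
    and "in_disc cl a"
    and "\<forall>j<n. m j \<in> horizontal n G a"
    and "inj_on m {..<n}"
    and "\<not> module.dependent (hscale :: 'k \<Rightarrow> _) (m ` {..<n})"
    and "module.span (hscale :: 'k \<Rightarrow> _) (m ` {..<n}) = horizontal n G a"
  shows "(optimal_basis n G a m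
          \<longleftrightarrow> (\<forall>r. \<forall>\<alpha> :: nat \<Rightarrow> 'k.
                 (\<exists>j\<in>{j. j < n \<and> RadV n (m j) = r}. \<alpha> j \<noteq> 0) \<longrightarrow>
                 RadV n (\<Sum>j\<in>{j. j < n \<and> RadV n (m j) = r}. hscale (\<alpha> j) (m j)) = r))
       \<and> (optimal_basis n G a m
          \<longleftrightarrow> (\<forall>y \<in> horizontal n G a. y \<noteq> 0 \<longrightarrow>
                 (\<forall>\<beta> :: nat \<Rightarrow> 'k. y = (\<Sum>i<n. hscale (\<beta> i) (m i)) \<longrightarrow>
                    (\<forall>i<n. \<beta> i \<noteq> 0 \<longrightarrow> RadV n y \<le> RadV n (m i))
                  \<and> (\<exists>i<n. \<beta> i \<noteq> 0 \<and> RadV n (m i) = RadV n y))))"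
  proof -
  have M: "\<forall>x y :: 'k. absk (x * y) = absk x * absk y"
    and UM: "\<forall>x y :: 'k. absk (x + y) \<le> max (absk x) (absk y)"
    using assms(1) unfolding padic_alg_closed_complete_field_def by blast+
  interpret vector_space "hscale :: 'k \<Rightarrow> (nat \<Rightarrow> 'k fps) \<Rightarrow> _" by (rule vs_hscale)
  show ?thesis
  proof (cases "n = 0")
    case True
    have H: "horizontal n G a = {0}" using assms(7) True by simp
    have "optimal_basis n G a m" unfolding optimal_basis_def using True
      by (intro exI[of _ id]) simp
    then show ?thesis using H True by auto
  next
    case False
    then have n: "0 < n" by simp
    interpret U: ultra "hscale :: 'k \<Rightarrow> (nat \<Rightarrow> 'k fps) \<Rightarrow> _" "RadV n" m n
    proof unfold_locales
      show "independent (m ` {..<n})" by (rule assms(6))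
      show "inj_on m {..<n}" by (rule assms(5))
      show "min (RadV n x) (RadV n y) \<le> RadV n (x + y)" for x y :: "nat \<Rightarrow> 'k fps"
      proof -
        have "\<forall>i<n. min (RadV n x) (RadV n y) \<le> Rad ((x + y) i)"
        proof (intro allI impI)
          fix i assume i: "i < n"
          have "min (RadV n x) (RadV n y) \<le> min (Rad (x i)) (Rad (y i))"
            using RadV_le[OF i, of x] RadV_le[OF i, of y] by linarith
          also have "\<dots> \<le> Rad (x i + y i)" by (rule Rad_add[OF UM])
          finally show "min (RadV n x) (RadV n y) \<le> Rad ((x + y) i)" by simp
        qed
        then show ?thesis using RadV_ge_iff[OF n] by blast
      qed
      show "RadV n (hscale c x) = RadV n x" if "c \<noteq> 0" for c and x :: "nat \<Rightarrow> 'k fps"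
        unfolding RadV_def hscale_def using Rad_scale[OF M that] by simp
      show "RadV n (0 :: nat \<Rightarrow> 'k fps) = 1"
      proof -
        have e: "(\<lambda>i. Rad (0 :: 'k fps)) ` {..<n} = {1}"
          using n Rad_zero by auto
        have "RadV n (0 :: nat \<Rightarrow> 'k fps) = Min ((\<lambda>i. Rad (0 :: 'k fps)) ` {..<n})"
          unfolding RadV_def by simp
        then show ?thesis unfolding e by simp
      qed
      show "RadV n x \<le> 1" for x :: "nat \<Rightarrow> 'k fps" by (rule RadV_le1[OF n])
      show "0 < RadV n x" if "x \<in> span (m ` {..<n})" for x
        using horiz_pos[OF n] that assms(7) by blast
    qed
    have W: "ker_r n G a r = U.W r" if "0 < r" "r \<le> 1" for r
      unfolding U.W_def using in_ker_iff[OF n that] assms(7) by blast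
    have mu: "multirad n G a i = U.mu i" for i
    proof -
      have "{r. 0 < r \<and> r \<le> 1 \<and> n - i + 1 \<le> dim (ker_r n G a r)} =
            {r. 0 < r \<and> r \<le> 1 \<and> n - i + 1 \<le> dim (U.W r)}"
        using W by auto
      then show ?thesis unfolding multirad_def U.mu_def by simp
    qed
    have opt: "optimal_basis n G a m = U.opt"
      unfolding optimal_basis_def U.opt_def mu ..
    show ?thesis using U.main unfolding opt U.cond2_def U.cond3_def assms(7) .
  qed
qed

end
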